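(* Let $\lambda$ be a sufficiently large constant, let $d=np\ge\lambda n^{1/2}$, and let $\delta<1/10$. Then with probability $1-o(1)$ (as $n\to\infty$) the random graph $G(n,p)$ has the following property: for every partition $P_0,N_0$ of $V_n$ with $|P_0|\ge n(1-\delta)$, if majority dynamics is started with all vertices of $P_0$ in state $+1$ and all vertices of $N_0$ in state $-1$, then after two rounds all vertices have the same state.
   Context: $G(n,p)$ is the binomial random graph on $V_n=\{1,\dots,n\}$ (each pair an edge independently with probability $p$). Majority dynamics: states $S_t(v)\in\{-1,+1\}$, with $S_{t+1}(v)=\operatorname{sgn}(\sum_{u\in N(v)}S_t(u))$ if this sum is nonzero and $S_{t+1}(v)=S_t(v)$ otherwise, where $N(v)$ is the neighbourhood of $v$. *)

theory Defs
  imports "HOL-Probability.Probability"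
begin

definition V :: "nat \<Rightarrow> nat set" where "V n = {1..n}"

definition gnp :: "nat \<Rightarrow> real \<Rightarrow> (nat \<times> nat \<Rightarrow> bool) pmf" where
  "gnp n p = Pi_pmf {(i,j). i \<in> V n \<and> j \<in> V n \<and> i < j} False (\<lambda>_. bernoulli_pmf p)"

definition adj :: "(nat \<times> nat \<Rightarrow> bool) \<Rightarrow> nat \<Rightarrow> nat \<Rightarrow> bool" where
  "adj G u v = ((u < v \<and> G (u,v)) \<or> (v < u \<and> G (v,u)))"

definition nbhd :: "nat \<Rightarrow> (nat \<times> nat \<Rightarrow> bool) \<Rightarrow> nat \<Rightarrow> nat set" where
  "nbhd n G v = {u \<in> V n. adj G u v}"

definition maj_step :: "nat \<Rightarrow> (nat \<times> nat \<Rightarrow> bool) \<Rightarrow> (nat \<Rightarrow> int) \<Rightarrow> (nat \<Rightarrow> int)" where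
  "maj_step n G S = (\<lambda>v. let s = (\<Sum>u\<in>nbhd n G v. S u) in
      if s > 0 then 1 else if s < 0 then -1 else S v)"

definition init_state :: "nat set \<Rightarrow> nat \<Rightarrow> int" where
  "init_state P0 = (\<lambda>v. if v \<in> P0 then 1 else -1)"

definition two_round_consensus :: "real \<Rightarrow> nat \<Rightarrow> (nat \<times> nat \<Rightarrow> bool) \<Rightarrow> bool" where
  "two_round_consensus \<delta> n G =
    (\<forall>P0. P0 \<subseteq> V n \<longrightarrow> real (card P0) \<ge> real n * (1 - \<delta>) \<longrightarrow>
       (\<exists>c. \<forall>v\<in>V n. maj_step n G (maj_step n G (init_state P0)) v = c))"

end

theory Submission
  imports Defs "HOL-Real_Asymp.Real_Asymp"
begin

definition E :: "nat \<Rightarrow> (nat \<times> nat) set" where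
  "E n = {(i,j). i \<in> V n \<and> j \<in> V n \<and> i < j}"

lemma finite_E: "finite (E n)"
proof -
  have "E n \<subseteq> V n \<times> V n" by (auto simp: E_def)
  then show ?thesis by (rule finite_subset) (auto simp: V_def)
qed

lemma exp_le_quad:
  fixes x :: real assumes "\<bar>x\<bar> \<le> 1" shows "exp x \<le> 1 + x + x\<^sup>2"
proof (cases "x \<ge> 0")
  case True then show ?thesis by (intro exp_bound) (use assms in auto)
next
  case False
  define y where "y = -x"
  have y: "0 \<le> y" "y \<le> 1" using False assms by (auto simp: y_def)
  have e: "1 + y + y\<^sup>2 / 2 \<le> exp y" using exp_lower_Taylor_quadratic y by blast
  have pos: "0 \<le> 1 - y + y\<^sup>2" using y zero_le_power2[of y] by linarith
  have eq: "(1 - y + y\<^sup>2) * (1 + y + y\<^sup>2 / 2) = 1 + y\<^sup>2/2 + y^3/2 + y^4/2"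
    by (simp add: field_simps power2_eq_square power3_eq_cube power4_eq_xxxx)
  have "0 \<le> y\<^sup>2/2 + y^3/2 + y^4/2" using y by simp
  hence "1 \<le> (1 - y + y\<^sup>2) * (1 + y + y\<^sup>2 / 2)" using eq by linarith
  also have "\<dots> \<le> (1 - y + y\<^sup>2) * exp y" using e pos by (intro mult_left_mono) auto
  finally have q: "1 \<le> (1 - y + y\<^sup>2) * exp y" .
  have "exp (-y) = exp (-y) * 1" by simp
  also have "\<dots> \<le> exp (-y) * ((1 - y + y\<^sup>2) * exp y)" using q by (intro mult_left_mono) auto
  also have "\<dots> = (1 - y + y\<^sup>2) * (exp (-y) * exp y)" by (simp only: ac_simps)
  also have "exp (-y) * exp y = 1" by (simp add: exp_add[symmetric])
  finally show ?thesis by (simp add: y_def)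
qed

lemma bern_mgf:
  fixes p x :: real assumes "0 \<le> p" "p \<le> 1" "\<bar>x\<bar> \<le> 1"
  shows "exp x * p + 1 * (1 - p) \<le> exp (p * (x + x\<^sup>2))"
proof -
  have "exp x * p + 1 * (1 - p) = 1 + p * (exp x - 1)" by (simp add: algebra_simps)
  also have "\<dots> \<le> 1 + p * (x + x\<^sup>2)" using exp_le_quad[OF assms(3)] assms
    by (intro add_left_mono mult_left_mono) auto
  also have "\<dots> \<le> exp (p * (x + x\<^sup>2))" by (rule exp_ge_add_one_self)
  finally show ?thesis .
qed

lemma chernoff:
  fixes w :: "nat \<times> nat \<Rightarrow> real" and \<theta> c p :: real
  assumes p: "0 \<le> p" "p \<le> 1" and th: "0 \<le> \<theta>" and wb: "\<And>e. e \<in> E n \<Longrightarrow> \<bar>\<theta> * w e\<bar> \<le> 1"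
  shows "measure_pmf.prob (gnp n p) {G. c \<le> (\<Sum>e\<in>E n. if G e then w e else 0)}
     \<le> exp (p * (\<Sum>e\<in>E n. \<theta> * w e + (\<theta> * w e)\<^sup>2) - \<theta> * c)"
proof -
  let ?M = "gnp n p"
  define X where "X G = (\<Sum>e\<in>E n. if G e then w e else 0)" for G :: "nat \<times> nat \<Rightarrow> bool"
  define f where "f e b = exp (\<theta> * (if b then w e else 0))" for e and b :: bool
  have Xb: "\<bar>X G\<bar> \<le> (\<Sum>e\<in>E n. \<bar>w e\<bar>)" for G
    unfolding X_def by (rule order.trans[OF sum_abs]) (intro sum_mono, auto)
  have int: "integrable (measure_pmf ?M) (\<lambda>G. exp (\<theta> * (X G - c)))"
  proof (rule measure_pmf.integrable_const_bound[where B = "exp (\<theta> * ((\<Sum>e\<in>E n. \<bar>w e\<bar>) + \<bar>c\<bar>))"])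
    show "AE G in measure_pmf ?M. norm (exp (\<theta> * (X G - c))) \<le> exp (\<theta> * ((\<Sum>e\<in>E n. \<bar>w e\<bar>) + \<bar>c\<bar>))"
    proof (intro AE_pmfI)
      fix G
      have "X G - c \<le> (\<Sum>e\<in>E n. \<bar>w e\<bar>) + \<bar>c\<bar>" using Xb[of G] by linarith
      then show "norm (exp (\<theta> * (X G - c))) \<le> exp (\<theta> * ((\<Sum>e\<in>E n. \<bar>w e\<bar>) + \<bar>c\<bar>))"
        using th by (simp add: mult_left_mono)
    qed
  qed auto
  have "measure_pmf.prob ?M {G. c \<le> X G} = measure_pmf.expectation ?M (indicator {G. c \<le> X G})"
    by simp
  also have "\<dots> \<le> measure_pmf.expectation ?M (\<lambda>G. exp (\<theta> * (X G - c)))"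
  proof (rule integral_mono[OF _ int])
    show "integrable (measure_pmf ?M) (indicator {G. c \<le> X G} :: _ \<Rightarrow> real)"
      by (rule measure_pmf.integrable_const_bound[where B=1]) auto
    fix G
    show "indicator {G. c \<le> X G} G \<le> exp (\<theta> * (X G - c))"
      using th by (auto simp: indicator_def)
  qed
  also have "(\<lambda>G. exp (\<theta> * (X G - c))) = (\<lambda>G. exp (- \<theta> * c) * (\<Prod>e\<in>E n. f e (G e)))"
  proof
    fix G :: "nat \<times> nat \<Rightarrow> bool"
    have "\<theta> * X G = (\<Sum>e\<in>E n. \<theta> * (if G e then w e else 0))" by (simp add: X_def sum_distrib_left)
    hence "exp (\<theta> * X G) = (\<Prod>e\<in>E n. f e (G e))" by (simp add: f_def exp_sum finite_E)
    moreover have "exp (\<theta> * (X G - c)) = exp (- \<theta> * c) * exp (\<theta> * X G)"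
      by (simp add: exp_add[symmetric] algebra_simps)
    ultimately show "exp (\<theta> * (X G - c)) = exp (- \<theta> * c) * (\<Prod>e\<in>E n. f e (G e))" by simp
  qed
  also have "measure_pmf.expectation ?M \<dots> = exp (- \<theta> * c) * measure_pmf.expectation ?M (\<lambda>G. \<Prod>e\<in>E n. f e (G e))"
    by simp
  also have "measure_pmf.expectation ?M (\<lambda>G. \<Prod>e\<in>E n. f e (G e)) = (\<Prod>e\<in>E n. measure_pmf.expectation (bernoulli_pmf p) (f e))"
    unfolding gnp_def E_def[symmetric]
    by (rule expectation_prod_Pi_pmf) (auto simp: finite_E f_def integrable_measure_pmf_finite)
  also have "\<dots> = (\<Prod>e\<in>E n. exp (\<theta> * w e) * p + 1 * (1 - p))"
    using p by (simp add: f_def)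
  also have "\<dots> \<le> (\<Prod>e\<in>E n. exp (p * (\<theta> * w e + (\<theta> * w e)\<^sup>2)))"
    by (intro prod_mono conjI bern_mgf p wb) (use p in \<open>auto intro!: add_nonneg_nonneg\<close>)
  also have "\<dots> = exp (p * (\<Sum>e\<in>E n. \<theta> * w e + (\<theta> * w e)\<^sup>2))"
    by (simp add: exp_sum finite_E sum_distrib_left)
  finally show ?thesis
    by (simp add: X_def exp_diff exp_minus field_simps)
qed

definition wT :: "(nat \<Rightarrow> real) \<Rightarrow> nat set \<Rightarrow> nat \<times> nat \<Rightarrow> real" where
  "wT f T e = (if snd e \<in> T then f (fst e) else 0) + (if fst e \<in> T then f (snd e) else 0)"

lemma finite_V[simp]: "finite (V n)" by (simp add: V_def)
lemma card_V[simp]: "card (V n) = n" by (simp add: V_def)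

lemma sum_nbhd_edges:
  assumes "T \<subseteq> V n"
  shows "(\<Sum>v\<in>T. \<Sum>u\<in>nbhd n G v. f u) = (\<Sum>e\<in>E n. if G e then wT f T e else 0)"
proof -
  define h where "h x = (if snd x \<in> T \<and> adj G (fst x) (snd x) then f (fst x) else 0)" for x
  have fin: "finite (V n \<times> V n)" by simp
  have "(\<Sum>v\<in>T. \<Sum>u\<in>nbhd n G v. f u) = (\<Sum>v\<in>T. \<Sum>u\<in>V n. if adj G u v then f u else 0)"
    unfolding nbhd_def by (intro sum.cong refl sum.inter_filter) simp
  also have "\<dots> = (\<Sum>v\<in>V n. \<Sum>u\<in>V n. h (u, v))"
  proof -
    have "(\<Sum>v\<in>T. \<Sum>u\<in>V n. if adj G u v then f u else 0) = (\<Sum>v\<in>V n \<inter> T. \<Sum>u\<in>V n. if adj G u v then f u else 0)"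
      using assms by (simp add: Int_absorb1)
    also have "\<dots> = (\<Sum>v\<in>V n. if v \<in> T then (\<Sum>u\<in>V n. if adj G u v then f u else 0) else 0)"
      by (simp add: sum.inter_restrict)
    also have "\<dots> = (\<Sum>v\<in>V n. \<Sum>u\<in>V n. h (u, v))"
      unfolding h_def by (auto intro!: sum.cong)
    finally show ?thesis .
  qed
  also have "\<dots> = (\<Sum>u\<in>V n. \<Sum>v\<in>V n. h (u, v))" by (rule sum.swap)
  also have "\<dots> = (\<Sum>x\<in>V n \<times> V n. h x)" by (simp add: sum.cartesian_product)
  also have "\<dots> = (\<Sum>x\<in>E n \<union> prod.swap ` E n. h x)"
  proof (rule sum.mono_neutral_right[OF fin])
    show "E n \<union> prod.swap ` E n \<subseteq> V n \<times> V n" by (auto simp: E_def)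
    show "\<forall>x\<in>V n \<times> V n - (E n \<union> prod.swap ` E n). h x = 0"
    proof
      fix x assume x: "x \<in> V n \<times> V n - (E n \<union> prod.swap ` E n)"
      obtain a b where ab: "x = (a, b)" by (cases x)
      have "a = b"
      proof (rule ccontr)
        assume "a \<noteq> b"
        then have "a < b \<or> b < a" by linarith
        then show False using x ab by (auto simp: E_def image_iff)
      qed
      then show "h x = 0" using ab by (simp add: h_def adj_def)
    qed
  qed
  also have "\<dots> = (\<Sum>x\<in>E n. h x) + (\<Sum>x\<in>prod.swap ` E n. h x)"
    by (rule sum.union_disjoint) (use finite_E[of n] in \<open>auto simp: E_def\<close>)
  also have "(\<Sum>x\<in>prod.swap ` E n. h x) = (\<Sum>x\<in>E n. h (prod.swap x))"
    by (subst sum.reindex) (auto intro: inj_on_subset[OF swap_inj_on])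
  also have "(\<Sum>x\<in>E n. h x) + (\<Sum>x\<in>E n. h (prod.swap x)) = (\<Sum>x\<in>E n. h x + h (prod.swap x))"
    by (simp add: sum.distrib)
  also have "\<dots> = (\<Sum>e\<in>E n. if G e then wT f T e else 0)"
    by (intro sum.cong refl) (auto simp: E_def h_def adj_def wT_def)
  finally show ?thesis .
qed

lemma nbhd_True: "v \<in> V n \<Longrightarrow> nbhd n (\<lambda>_. True) v = V n - {v}"
  by (auto simp: nbhd_def adj_def)

lemma sum_wT:
  assumes "T \<subseteq> V n"
  shows "(\<Sum>e\<in>E n. wT f T e) = (\<Sum>v\<in>T. \<Sum>u\<in>V n - {v}. f u)"
proof -
  have "(\<Sum>v\<in>T. \<Sum>u\<in>V n - {v}. f u) = (\<Sum>v\<in>T. \<Sum>u\<in>nbhd n (\<lambda>_. True) v. f u)"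
    using assms by (intro sum.cong refl) (auto simp: nbhd_True)
  also have "\<dots> = (\<Sum>e\<in>E n. wT f T e)" by (subst sum_nbhd_edges[OF assms]) simp
  finally show ?thesis by simp
qed

definition sig :: "nat set \<Rightarrow> nat \<Rightarrow> real" where
  "sig S u = (if u \<in> S then 1 else -1)"

lemma nbhd_sub: "nbhd n G v \<subseteq> V n" by (auto simp: nbhd_def)

lemma maj_pm: "(\<forall>u. S u = 1 \<or> S u = -1) \<Longrightarrow> maj_step n G S u = 1 \<or> maj_step n G S u = -1"
  by (auto simp: maj_step_def Let_def)

lemma consensus_det:
  fixes \<delta> :: real and k n :: nat
  assumes dl: "\<delta> < 1/10"
  and A: "\<forall>v\<in>V n. 2*k < card (nbhd n G v)"
  and B: "\<forall>S T. S \<subseteq> V n \<longrightarrow> 10 * card S \<le> n \<longrightarrow> T \<subseteq> V n \<longrightarrow> card T = k \<longrightarrow>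
            (\<Sum>v\<in>T. \<Sum>u\<in>nbhd n G v. sig S u) < 0"
  shows "two_round_consensus \<delta> n G"
  unfolding two_round_consensus_def
proof (intro allI impI)
  fix P0 assume P0: "P0 \<subseteq> V n" and cP: "real n * (1 - \<delta>) \<le> real (card P0)"
  define S where "S = V n - P0"
  have SV: "S \<subseteq> V n" by (auto simp: S_def)
  have cS: "card S = n - card P0" using P0 finite_subset[OF P0] by (simp add: S_def card_Diff_subset)
  have "card P0 \<le> n" using P0 card_mono[of "V n" P0] by simp
  hence "real (card S) = real n - real (card P0)" using cS by simp
  also have "\<dots> \<le> real n * \<delta>" using cP by (simp add: algebra_simps)
  also have "\<dots> \<le> real n * (1/10)" using dl by (intro mult_left_mono) auto
  finally have S10: "10 * card S \<le> n" by linarith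
  define S1 where "S1 = maj_step n G (init_state P0)"
  have pm0: "\<forall>u. init_state P0 u = 1 \<or> init_state P0 u = -1" by (simp add: init_state_def)
  have pm1: "\<forall>u. S1 u = 1 \<or> S1 u = -1" unfolding S1_def using maj_pm[OF pm0, of n G] by blast
  define N1 where "N1 = {v \<in> V n. S1 v \<noteq> 1}"
  have finN1: "finite N1" by (simp add: N1_def)
  have initsig: "real_of_int (init_state P0 u) = - sig S u" if "u \<in> V n" for u
    using that by (auto simp: init_state_def sig_def S_def)
  have cN1: "card N1 < k"
  proof (rule ccontr)
    assume "\<not> card N1 < k"
    then have "k \<le> card N1" by simp
    then obtain T where T: "T \<subseteq> N1" "card T = k" by (rule obtain_subset_with_card_n)
    have TV: "T \<subseteq> V n" using T by (auto simp: N1_def)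
    have lt: "(\<Sum>v\<in>T. \<Sum>u\<in>nbhd n G v. sig S u) < 0" using B[rule_format, OF SV S10 TV T(2)] .
    have nn: "0 \<le> (\<Sum>u\<in>nbhd n G v. sig S u)" if v: "v \<in> T" for v
    proof -
      have "S1 v \<noteq> 1" using v T by (auto simp: N1_def)
      hence "\<not> (\<Sum>u\<in>nbhd n G v. init_state P0 u) > 0"
        by (auto simp: S1_def maj_step_def Let_def)
      hence "(\<Sum>u\<in>nbhd n G v. init_state P0 u) \<le> 0" by simp
      hence "real_of_int (\<Sum>u\<in>nbhd n G v. init_state P0 u) \<le> 0" by (simp only: of_int_le_0_iff)
      also have "real_of_int (\<Sum>u\<in>nbhd n G v. init_state P0 u) = (\<Sum>u\<in>nbhd n G v. - sig S u)"
        using nbhd_sub[of n G v] by (auto simp: of_int_sum intro!: sum.cong initsig)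
      finally show ?thesis by (simp add: sum_negf)
    qed
    have ge: "0 \<le> (\<Sum>v\<in>T. \<Sum>u\<in>nbhd n G v. sig S u)" by (rule sum_nonneg) (rule nn, assumption)
    show False using lt ge by linarith
  qed
  show "\<exists>c. \<forall>v\<in>V n. maj_step n G S1 v = c"
  proof (intro exI ballI)
    fix v assume v: "v \<in> V n"
    let ?N = "nbhd n G v"
    have finN: "finite ?N" by (rule finite_subset[OF nbhd_sub]) simp
    have "(\<Sum>u\<in>?N. (if u \<in> N1 then -1 else 1)) \<le> (\<Sum>u\<in>?N. S1 u)"
    proof (intro sum_mono)
      fix u assume "u \<in> ?N"
      hence "u \<in> V n" using nbhd_sub[of n G v] by blast
      then show "(if u \<in> N1 then -1 else 1) \<le> S1 u" using pm1[rule_format, of u] by (auto simp: N1_def)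
    qed
    moreover have "(\<Sum>u\<in>?N. (if u \<in> N1 then -1 else 1::int)) = int (card ?N) - 2 * int (card (?N \<inter> N1))"
    proof -
      have "(\<Sum>u\<in>?N. (if u \<in> N1 then -1 else 1::int)) = (\<Sum>u\<in>?N. 1 - (if u \<in> N1 then 2 else 0))"
        by (intro sum.cong) auto
      also have "\<dots> = int (card ?N) - (\<Sum>u\<in>?N. (if u \<in> N1 then 2 else 0))"
        by (simp add: sum_subtractf)
      also have "(\<Sum>u\<in>?N. (if u \<in> N1 then 2 else 0::int)) = 2 * int (card (?N \<inter> N1))"
        using finN by (simp add: sum.If_cases)
      finally show ?thesis .
    qed
    moreover have "card (?N \<inter> N1) \<le> card N1" using finN1 by (simp add: card_mono)
    moreover have "2 * k < card ?N" using A v by blast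
    ultimately have "(\<Sum>u\<in>?N. S1 u) > 0" using cN1 by linarith
    then show "maj_step n G S1 v = 1" by (simp add: maj_step_def)
  qed
qed

lemma wT1_bounds: "0 \<le> wT (\<lambda>_. 1) T e" "wT (\<lambda>_. 1) T e \<le> 2"
  by (auto simp: wT_def)

lemma card_nbhd_sum:
  assumes "v \<in> V n"
  shows "real (card (nbhd n G v)) = (\<Sum>e\<in>E n. if G e then wT (\<lambda>_. 1) {v} e else 0)"
proof -
  have "real (card (nbhd n G v)) = (\<Sum>v'\<in>{v}. \<Sum>u\<in>nbhd n G v'. (\<lambda>_. 1::real) u)" by simp
  also have "\<dots> = (\<Sum>e\<in>E n. if G e then wT (\<lambda>_. 1) {v} e else 0)"
    by (rule sum_nbhd_edges) (use assms in auto)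
  finally show ?thesis .
qed

lemma probA:
  assumes p: "0 \<le> p" "p \<le> 1" and v: "v \<in> V n"
  shows "measure_pmf.prob (gnp n p) {G. card (nbhd n G v) \<le> 2 * k}
           \<le> exp (- (p * (real n - 1)) / 8 + real k / 2)"
proof -
  define w where "w e = - wT (\<lambda>_. 1) {v} e" for e
  have set_eq: "{G. card (nbhd n G v) \<le> 2 * k} = {G. - real (2 * k) \<le> (\<Sum>e\<in>E n. if G e then w e else 0)}"
  proof -
    have "(\<Sum>e\<in>E n. if G e then w e else 0) = - real (card (nbhd n G v))" for G
      by (simp add: card_nbhd_sum[OF v] w_def sum_negf[symmetric] if_distrib cong: if_cong)
    then show ?thesis by auto
  qed
  have wb: "\<bar>1/4 * w e\<bar> \<le> 1" for e using wT1_bounds[of "{v}" e] by (simp add: w_def)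
  have ch: "measure_pmf.prob (gnp n p) {G. - real (2 * k) \<le> (\<Sum>e\<in>E n. if G e then w e else 0)}
     \<le> exp (p * (\<Sum>e\<in>E n. 1/4 * w e + (1/4 * w e)\<^sup>2) - 1/4 * (- real (2 * k)))"
    by (rule chernoff) (use p wb in auto)
  have "(\<Sum>e\<in>E n. 1/4 * w e + (1/4 * w e)\<^sup>2) \<le> (\<Sum>e\<in>E n. - 1/8 * wT (\<lambda>_. 1) {v} e)"
  proof (rule sum_mono)
    fix e
    have a: "0 \<le> wT (\<lambda>_. 1) {v} e" "wT (\<lambda>_. 1) {v} e \<le> 2" by (rule wT1_bounds)+
    have "(wT (\<lambda>_. 1) {v} e)\<^sup>2 \<le> 2 * wT (\<lambda>_. 1) {v} e"
      using mult_right_mono[OF a(2) a(1)] by (simp add: power2_eq_square)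
    then show "1/4 * w e + (1/4 * w e)\<^sup>2 \<le> - 1/8 * wT (\<lambda>_. 1) {v} e"
      by (simp add: w_def power_mult_distrib power2_eq_square)
  qed
  also have "\<dots> = - 1/8 * (\<Sum>e\<in>E n. wT (\<lambda>_. 1) {v} e)" by (simp add: sum_distrib_left)
  also have "(\<Sum>e\<in>E n. wT (\<lambda>_. 1) {v} e) = real n - 1"
    using v by (subst sum_wT) (auto simp: card_Diff_singleton V_def of_nat_diff)
  finally have sb: "(\<Sum>e\<in>E n. 1/4 * w e + (1/4 * w e)\<^sup>2) \<le> - 1/8 * (real n - 1)" .
  have "p * (\<Sum>e\<in>E n. 1/4 * w e + (1/4 * w e)\<^sup>2) \<le> p * (- 1/8 * (real n - 1))"
    using sb p by (intro mult_left_mono) auto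
  then have "p * (\<Sum>e\<in>E n. 1/4 * w e + (1/4 * w e)\<^sup>2) - 1/4 * (- real (2 * k))
      \<le> - (p * (real n - 1)) / 8 + real k / 2" by simp
  then show ?thesis using ch set_eq by (metis (no_types, lifting) exp_le_cancel_iff order_trans)
qed

lemma sum_sig: "S \<subseteq> V n \<Longrightarrow> (\<Sum>u\<in>V n. sig S u) = 2 * real (card S) - real n"
proof -
  assume S: "S \<subseteq> V n"
  have "(\<Sum>u\<in>V n. sig S u) = (\<Sum>u\<in>S. sig S u) + (\<Sum>u\<in>V n - S. sig S u)"
    using S by (metis finite_V sum.subset_diff add.commute)
  also have "\<dots> = real (card S) - real (card (V n - S))" by (simp add: sig_def)
  also have "card (V n - S) = n - card S" using S by (simp add: card_Diff_subset finite_subset[OF S])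
  also have "card S \<le> n" using card_mono[OF finite_V S] by simp
  ultimately show ?thesis by simp
qed

lemma probB:
  assumes p: "0 \<le> p" "p \<le> 1" and S: "S \<subseteq> V n" "10 * card S \<le> n"
    and T: "T \<subseteq> V n" "card T = k" and n5: "n \<ge> 5"
  shows "measure_pmf.prob (gnp n p) {G. 0 \<le> (\<Sum>v\<in>T. \<Sum>u\<in>nbhd n G v. sig S u)}
           \<le> exp (- (p * real k * real n) / 25)"
proof -
  define w where "w = wT (sig S) T"
  have set_eq: "{G. 0 \<le> (\<Sum>v\<in>T. \<Sum>u\<in>nbhd n G v. sig S u)} = {G. 0 \<le> (\<Sum>e\<in>E n. if G e then w e else 0)}"
    unfolding w_def by (simp add: sum_nbhd_edges[OF T(1)])
  have sg: "\<bar>sig S u\<bar> = 1" for u by (simp add: sig_def)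
  have wb: "\<bar>1/5 * w e\<bar> \<le> 1" for e
  proof -
    have "\<bar>w e\<bar> \<le> 2" by (auto simp: w_def wT_def sig_def)
    then show ?thesis by simp
  qed
  have ch: "measure_pmf.prob (gnp n p) {G. 0 \<le> (\<Sum>e\<in>E n. if G e then w e else 0)}
     \<le> exp (p * (\<Sum>e\<in>E n. 1/5 * w e + (1/5 * w e)\<^sup>2) - 1/5 * 0)"
    by (rule chernoff) (use p wb in auto)
  have s1: "(\<Sum>e\<in>E n. w e) \<le> real k * (2 * real (card S) - real n + 1)"
  proof -
    have "(\<Sum>e\<in>E n. w e) = (\<Sum>v\<in>T. \<Sum>u\<in>V n - {v}. sig S u)" unfolding w_def by (rule sum_wT[OF T(1)])
    also have "\<dots> \<le> (\<Sum>v\<in>T. 2 * real (card S) - real n + 1)"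
    proof (rule sum_mono)
      fix v assume "v \<in> T"
      hence v: "v \<in> V n" using T by blast
      have "(\<Sum>u\<in>V n - {v}. sig S u) = (\<Sum>u\<in>V n. sig S u) - sig S v"
        using v by (simp add: sum_diff1)
      also have "\<dots> \<le> 2 * real (card S) - real n + 1" using sum_sig[OF S(1)] by (simp add: sig_def)
      finally show "(\<Sum>u\<in>V n - {v}. sig S u) \<le> 2 * real (card S) - real n + 1" .
    qed
    also have "\<dots> = real k * (2 * real (card S) - real n + 1)" using T by simp
    finally show ?thesis .
  qed
  have s2: "(\<Sum>e\<in>E n. (w e)\<^sup>2) \<le> 2 * (real k * (real n - 1))"
  proof -
    have "(\<Sum>e\<in>E n. (w e)\<^sup>2) \<le> (\<Sum>e\<in>E n. 2 * wT (\<lambda>_. 1) T e)"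
    proof (rule sum_mono)
      fix e
      define a where "a = (if snd e \<in> T then sig S (fst e) else 0)"
      define b where "b = (if fst e \<in> T then sig S (snd e) else 0)"
      have "w e = a + b" by (simp add: w_def wT_def a_def b_def)
      moreover have "(a + b)\<^sup>2 \<le> 2 * (a\<^sup>2 + b\<^sup>2)"
        using zero_le_power2[of "a - b"] by (simp add: power2_eq_square algebra_simps)
      moreover have "a\<^sup>2 + b\<^sup>2 = wT (\<lambda>_. 1) T e"
        by (simp add: a_def b_def wT_def sig_def)
      ultimately show "(w e)\<^sup>2 \<le> 2 * wT (\<lambda>_. 1) T e" by simp
    qed
    also have "\<dots> = 2 * (\<Sum>e\<in>E n. wT (\<lambda>_. 1) T e)" by (simp add: sum_distrib_left)
    also have "(\<Sum>e\<in>E n. wT (\<lambda>_. 1) T e) = (\<Sum>v\<in>T. real (card (V n - {v})))"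
      by (subst sum_wT[OF T(1)]) simp
    also have "\<dots> = (\<Sum>v\<in>T. real n - 1)"
      using T by (intro sum.cong refl) (auto simp: card_Diff_singleton V_def of_nat_diff subset_iff)
    also have "\<dots> = real k * (real n - 1)" using T by simp
    finally show ?thesis by simp
  qed
  have "(\<Sum>e\<in>E n. 1/5 * w e + (1/5 * w e)\<^sup>2) = 1/5 * (\<Sum>e\<in>E n. w e) + 1/25 * (\<Sum>e\<in>E n. (w e)\<^sup>2)"
    by (simp add: sum.distrib sum_distrib_left power_mult_distrib power_divide)
  also have "\<dots> \<le> 1/5 * (real k * (2 * real (card S) - real n + 1)) + 1/25 * (2 * (real k * (real n - 1)))"
    using s1 s2 by linarith
  also have "\<dots> = real k * ((2 * real (card S) - real n + 1) / 5 + 2 * (real n - 1) / 25)"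
    by (simp add: field_simps)
  also have "\<dots> \<le> real k * (- real n / 25)"
  proof (rule mult_left_mono)
    have "10 * real (card S) \<le> real n" using S(2) by linarith
    have "(5::real) \<le> real n" using n5 by simp
    then show "(2 * real (card S) - real n + 1) / 5 + 2 * (real n - 1) / 25 \<le> - real n / 25"
      using \<open>10 * real (card S) \<le> real n\<close> \<open>(5::real) \<le> real n\<close> by (simp add: field_simps)
  qed simp
  finally have sb: "(\<Sum>e\<in>E n. 1/5 * w e + (1/5 * w e)\<^sup>2) \<le> real k * (- real n / 25)" .
  have "p * (\<Sum>e\<in>E n. 1/5 * w e + (1/5 * w e)\<^sup>2) \<le> p * (real k * (- real n / 25))"
    using sb p by (intro mult_left_mono) auto
  then have "p * (\<Sum>e\<in>E n. 1/5 * w e + (1/5 * w e)\<^sup>2) - 1/5 * 0 \<le> - (p * real k * real n) / 25"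
    by (simp add: algebra_simps)
  then show ?thesis using ch set_eq by (metis (no_types, lifting) exp_le_cancel_iff order_trans)
qed

theorem lemma4p1:
  shows "\<exists>lam::real>0. \<forall>\<delta>::real. \<forall>p::nat \<Rightarrow> real. \<delta> < 1/10 \<longrightarrow>
     (\<forall>n. 0 \<le> p n \<and> p n \<le> 1) \<longrightarrow>
     (\<forall>\<^sub>F n in sequentially. real n * p n \<ge> lam * sqrt (real n)) \<longrightarrow>
     ((\<lambda>n. measure_pmf.prob (gnp n (p n)) {G. two_round_consensus \<delta> n G})
        \<longlonglongrightarrow> 1)"
proof (intro exI[of _ "100::real"] conjI allI impI)
  show "(0::real) < 100" by simp
  fix \<delta> :: real and p :: "nat \<Rightarrow> real"
  assume dl: "\<delta> < 1/10" and pb: "\<forall>n. 0 \<le> p n \<and> p n \<le> 1"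
    and ev: "\<forall>\<^sub>F n in sequentially. 100 * sqrt (real n) \<le> real n * p n"
  define k where "k n = nat \<lceil>sqrt (real n)\<rceil>" for n :: nat
  define g where "g n = real n * exp (-12 * sqrt (real n) + 1) + 4 ^ n * exp (-4 * real n)" for n :: nat
  have g0: "g \<longlonglongrightarrow> 0" unfolding g_def by real_asymp
  have key: "1 - g n \<le> measure_pmf.prob (gnp n (p n)) {G. two_round_consensus \<delta> n G}"
    if n5: "n \<ge> 5" and pn: "100 * sqrt (real n) \<le> real n * p n" for n
  proof -
    let ?M = "gnp n (p n)"
    let ?k = "k n"
    have p01: "0 \<le> p n" "p n \<le> 1" using pb by auto
    have kge: "sqrt (real n) \<le> real ?k" unfolding k_def by linarith
    have kle: "real ?k \<le> sqrt (real n) + 1"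
    proof -
      have "0 \<le> \<lceil>sqrt (real n)\<rceil>" using real_sqrt_ge_zero[of "real n"] by (subst zero_le_ceiling) linarith
      hence "real ?k = real_of_int \<lceil>sqrt (real n)\<rceil>" unfolding k_def by simp
      then show ?thesis using ceiling_correct[of "sqrt (real n)"] by linarith
    qed
    define BA where "BA = (\<Union>v\<in>V n. {G. card (nbhd n G v) \<le> 2 * ?k})"
    define I where "I = {x. fst x \<subseteq> V n \<and> 10 * card (fst x) \<le> n \<and> snd x \<subseteq> V n \<and> card (snd x) = ?k}"
    define BB where "BB = (\<Union>x\<in>I. {G. 0 \<le> (\<Sum>v\<in>snd x. \<Sum>u\<in>nbhd n G v. sig (fst x) u)})"
    have sub: "UNIV - (BA \<union> BB) \<subseteq> {G. two_round_consensus \<delta> n G}"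
    proof
      fix G assume G: "G \<in> UNIV - (BA \<union> BB)"
      have GA: "G \<notin> BA" and GB: "G \<notin> BB" using G by blast+
      have A: "\<forall>v\<in>V n. 2 * ?k < card (nbhd n G v)"
      proof
        fix v assume v: "v \<in> V n"
        have "G \<notin> {G. card (nbhd n G v) \<le> 2 * ?k}" using GA v unfolding BA_def by blast
        then show "2 * ?k < card (nbhd n G v)" by simp
      qed
      have B: "\<forall>S T. S \<subseteq> V n \<longrightarrow> 10 * card S \<le> n \<longrightarrow> T \<subseteq> V n \<longrightarrow> card T = ?k \<longrightarrow>
            (\<Sum>v\<in>T. \<Sum>u\<in>nbhd n G v. sig S u) < 0"
      proof (intro allI impI)
        fix S T assume "S \<subseteq> V n" "10 * card S \<le> n" "T \<subseteq> V n" "card T = ?k"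
        hence "(S, T) \<in> I" by (simp add: I_def)
        hence "G \<notin> {G. 0 \<le> (\<Sum>v\<in>snd (S, T). \<Sum>u\<in>nbhd n G v. sig (fst (S, T)) u)}"
          using GB unfolding BB_def by blast
        then show "(\<Sum>v\<in>T. \<Sum>u\<in>nbhd n G v. sig S u) < 0" by simp
      qed
      show "G \<in> {G. two_round_consensus \<delta> n G}" using consensus_det[OF dl A B] by simp
    qed
    have finI: "finite I"
    proof (rule finite_subset)
      show "I \<subseteq> Pow (V n) \<times> Pow (V n)" by (auto simp: I_def)
    qed simp
    have cI: "card I \<le> 4 ^ n"
    proof -
      have "card I \<le> card (Pow (V n) \<times> Pow (V n))"
        by (rule card_mono) (auto simp: I_def)
      also have "\<dots> = 4 ^ n" by (simp add: card_cartesian_product card_Pow power_mult_distrib[symmetric])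
      finally show ?thesis .
    qed
    have pA: "measure_pmf.prob ?M BA \<le> real n * exp (- (p n * (real n - 1)) / 8 + real ?k / 2)"
    proof -
      have "measure_pmf.prob ?M BA \<le> (\<Sum>v\<in>V n. measure_pmf.prob ?M {G. card (nbhd n G v) \<le> 2 * ?k})"
        unfolding BA_def by (rule measure_pmf.finite_measure_subadditive_finite) auto
      also have "\<dots> \<le> (\<Sum>v\<in>V n. exp (- (p n * (real n - 1)) / 8 + real ?k / 2))"
        by (intro sum_mono probA p01) 
      also have "\<dots> = real n * exp (- (p n * (real n - 1)) / 8 + real ?k / 2)" by simp
      finally show ?thesis .
    qed
    have pB: "measure_pmf.prob ?M BB \<le> 4 ^ n * exp (- (p n * real ?k * real n) / 25)"
    proof -
      have "measure_pmf.prob ?M BB \<le> (\<Sum>x\<in>I. measure_pmf.prob ?M {G. 0 \<le> (\<Sum>v\<in>snd x. \<Sum>u\<in>nbhd n G v. sig (fst x) u)})"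
        unfolding BB_def by (rule measure_pmf.finite_measure_subadditive_finite) (use finI in auto)
      also have "\<dots> \<le> (\<Sum>x\<in>I. exp (- (p n * real ?k * real n) / 25))"
      proof (rule sum_mono)
        fix x assume "x \<in> I"
        then show "measure_pmf.prob ?M {G. 0 \<le> (\<Sum>v\<in>snd x. \<Sum>u\<in>nbhd n G v. sig (fst x) u)}
            \<le> exp (- (p n * real ?k * real n) / 25)"
          by (intro probB p01 n5) (auto simp: I_def)
      qed
      also have "\<dots> = real (card I) * exp (- (p n * real ?k * real n) / 25)" by simp
      also have "\<dots> \<le> 4 ^ n * exp (- (p n * real ?k * real n) / 25)"
      proof (rule mult_right_mono)
        show "real (card I) \<le> 4 ^ n" using cI by (metis of_nat_le_iff of_nat_numeral of_nat_power)
      qed simp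
      finally show ?thesis .
    qed
    have sq: "sqrt (real n) * sqrt (real n) = real n" by simp
    have sqn: "0 \<le> sqrt (real n)" by simp
    have b1: "- (p n * (real n - 1)) / 8 + real ?k / 2 \<le> -12 * sqrt (real n) + 1"
    proof -
      have "p n * (real n - 1) = real n * p n - p n" by (simp add: algebra_simps)
      then show ?thesis using pn kle p01 by (simp add: divide_simps)
    qed
    have "100 * real n = 100 * sqrt (real n) * sqrt (real n)" using sq by simp
    also have "\<dots> \<le> (real n * p n) * real ?k"
      by (rule mult_mono[OF pn kge]) (use p01 sqn in auto)
    finally have "100 * real n \<le> p n * real ?k * real n" by (simp add: algebra_simps)
    hence b2: "- (p n * real ?k * real n) / 25 \<le> -4 * real n" by simp
    have "measure_pmf.prob ?M (BA \<union> BB) \<le> measure_pmf.prob ?M BA + measure_pmf.prob ?M BB"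
      by (rule measure_subadditive) (simp_all add: measure_pmf.emeasure_finite)
    also have "\<dots> \<le> g n"
    proof -
      have "real n * exp (- (p n * (real n - 1)) / 8 + real ?k / 2) \<le> real n * exp (-12 * sqrt (real n) + 1)"
        using b1 by (intro mult_left_mono) auto
      moreover have "(4::real) ^ n * exp (- (p n * real ?k * real n) / 25) \<le> 4 ^ n * exp (-4 * real n)"
        using b2 by (intro mult_left_mono) auto
      ultimately show ?thesis using pA pB unfolding g_def by linarith
    qed
    finally have pbad: "measure_pmf.prob ?M (BA \<union> BB) \<le> g n" .
    have "measure_pmf.prob ?M (UNIV - (BA \<union> BB)) = 1 - measure_pmf.prob ?M (BA \<union> BB)"
      using measure_pmf.prob_compl[of "BA \<union> BB" ?M] by simp
    moreover have "measure_pmf.prob ?M (UNIV - (BA \<union> BB)) \<le> measure_pmf.prob ?M {G. two_round_consensus \<delta> n G}"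
      by (rule measure_pmf.finite_measure_mono[OF sub]) simp
    ultimately show ?thesis using pbad by linarith
  qed
  show "(\<lambda>n. measure_pmf.prob (gnp n (p n)) {G. two_round_consensus \<delta> n G}) \<longlonglongrightarrow> 1"
  proof (rule tendsto_sandwich[of "\<lambda>n. 1 - g n" _ sequentially "\<lambda>n. 1"])
    show "\<forall>\<^sub>F n in sequentially. 1 - g n \<le> measure_pmf.prob (gnp n (p n)) {G. two_round_consensus \<delta> n G}"
      using ev eventually_ge_at_top[of "5::nat"] by eventually_elim (rule key)
    show "\<forall>\<^sub>F n in sequentially. measure_pmf.prob (gnp n (p n)) {G. two_round_consensus \<delta> n G} \<le> 1"
      by simp
    show "(\<lambda>n. 1 - g n) \<longlonglongrightarrow> 1" using tendsto_diff[OF tendsto_const g0, of 1] by simp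
  qed simp
qed

end
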